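(* Let $n\ge1$, $s\in\{1,\dots,n\}$, let $C\in\mathbb{R}^{n\times n}$ be symmetric positive definite and $z^*=\max\{\log\det(C_{S,S}) : S\subseteq\{1,\dots,n\},\ |S|=s\}$. For every $t$ with $0<t\le\lambda_{\min}(C)$, $$z^*=\max\Big\{\log\det\big(M_t(x)+tI\big) : x\in\{0,1\}^n,\ \textstyle\sum_{i=1}^n x_i=s\Big\}-(n-s)\log(t).$$
   Context: $\log$ is natural, $C_{S,S}$ is the principal submatrix indexed by $S$, $\lambda_{\min}(C)$ is the smallest eigenvalue of $C$. For $0\le t\le\lambda_{\min}(C)$ let $A(t)\in\mathbb{R}^{n\times n}$ be a Cholesky factor of $C-tI$ (so $C-tI=A(t)^\top A(t)$), with $i$-th column $a_i(t)$, and $M_t(x)=\sum_i x_i a_i(t)a_i(t)^\top$. *)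

theory Defs
  imports Complex_Main "Jordan_Normal_Form.Char_Poly" "Jordan_Normal_Form.DL_Submatrix"
begin

definition sym_pos_def :: "nat \<Rightarrow> real mat \<Rightarrow> bool" where
  "sym_pos_def n C \<longleftrightarrow> C \<in> carrier_mat n n \<and> transpose_mat C = C \<and>
     (\<forall>v \<in> carrier_vec n. v \<noteq> 0\<^sub>v n \<longrightarrow> v \<bullet> (C *\<^sub>v v) > 0)"

definition lambda_min :: "real mat \<Rightarrow> real" where
  "lambda_min C = Min {k. eigenvalue C k}"

definition cholesky_factor :: "nat \<Rightarrow> real mat \<Rightarrow> real mat \<Rightarrow> bool" where
  "cholesky_factor n D A \<longleftrightarrow> A \<in> carrier_mat n n \<and> upper_triangular A \<and>
     (\<forall>i<n. A $$ (i,i) \<ge> 0) \<and> D = transpose_mat A * A"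

(* M(x) = sum_i x_i a_i a_i^T, a_i the i-th column of A *)
definition Mx :: "nat \<Rightarrow> real mat \<Rightarrow> real vec \<Rightarrow> real mat" where
  "Mx n A x = mat n n (\<lambda>(j,k). \<Sum>i<n. x $ i * (A $$ (j,i)) * (A $$ (k,i)))"

end

theory Submission
  imports Defs
begin


lemma vv_pos: fixes v :: "real vec" assumes "v \<in> carrier_vec m" "v \<noteq> 0\<^sub>v m"
  shows "v \<bullet> v > 0"
proof -
  obtain i where i: "i < m" "v $ i \<noteq> 0" using assms by (metis eq_vecI carrier_vecD index_zero_vec dim_vec)
  have "v \<bullet> v = (\<Sum>j\<in>{0..<m}. v $ j * v $ j)" using assms unfolding scalar_prod_def by auto
  also have "\<dots> > 0"
  proof (rule sum_pos2[of _ i])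
    show "0 < v $ i * v $ i" using i by (smt (verit) mult_neg_neg mult_pos_pos)
  qed (use i in auto)
  finally show ?thesis .
qed

lemma smult_mat_mult_vec: fixes A :: "'a::comm_ring_1 mat"
  assumes "A \<in> carrier_mat nr nc" "v \<in> carrier_vec nc"
  shows "(k \<cdot>\<^sub>m A) *\<^sub>v v = k \<cdot>\<^sub>v (A *\<^sub>v v)"
  using assms by (intro eq_vecI) (auto simp: scalar_prod_def sum_distrib_left mult.assoc)

lemma det_pd_pos: fixes K :: "real mat"
  assumes K: "K \<in> carrier_mat m m"
  and pd: "\<And>v. v \<in> carrier_vec m \<Longrightarrow> v \<noteq> 0\<^sub>v m \<Longrightarrow> v \<bullet> (K *\<^sub>v v) > 0"
  shows "det K > 0"
proof -
  define L where "L = (\<lambda>l::real. l \<cdot>\<^sub>m K + (1 - l) \<cdot>\<^sub>m 1\<^sub>m m)"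
  have Lc: "L l \<in> carrier_mat m m" for l unfolding L_def using K by auto
  have nz: "det (L l) \<noteq> 0" if l: "0 \<le> l" "l \<le> 1" for l
  proof
    assume "det (L l) = 0"
    then obtain v where v: "v \<in> carrier_vec m" "v \<noteq> 0\<^sub>v m" "L l *\<^sub>v v = 0\<^sub>v m"
      using det_0_iff_vec_prod_zero_field[OF Lc] by blast
    have "L l *\<^sub>v v = l \<cdot>\<^sub>v (K *\<^sub>v v) + (1 - l) \<cdot>\<^sub>v v"
      unfolding L_def using K v by (simp add: add_mult_distrib_mat_vec[of _ m m] smult_mat_mult_vec[of _ m m])
    hence "v \<bullet> (L l *\<^sub>v v) = l * (v \<bullet> (K *\<^sub>v v)) + (1 - l) * (v \<bullet> v)"
      using K v by (simp add: scalar_prod_add_distrib[of _ m])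
    moreover have "v \<bullet> (K *\<^sub>v v) > 0" "v \<bullet> v > 0" using pd v vv_pos by auto
    ultimately have "v \<bullet> (L l *\<^sub>v v) > 0" using l
      by (smt (verit, best) mult_nonneg_nonneg mult_pos_pos)
    thus False using v by simp
  qed
  define g where "g = (\<lambda>l. det (L l))"
  have geq: "g l = (\<Sum>p\<in>{p. p permutes {0..<m}}. signof p *
      (\<Prod>i=0..<m. l * K $$ (i, p i) + (1 - l) * (if i = p i then 1 else 0)))" for l
    unfolding g_def det_def using Lc[of l]
    apply simp
    apply (intro sum.cong refl arg_cong2[where f="(*)"] prod.cong)
    using K by (auto simp: L_def permutes_in_image)
  have cont: "continuous_on {0..1} g"
    unfolding geq by (intro continuous_intros)
  have "L 0 = 1\<^sub>m m" unfolding L_def by (rule eq_matI) (use K in auto)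
  hence g0: "g 0 = 1" unfolding g_def by simp
  have "L 1 = K" unfolding L_def by (rule eq_matI) (use K in auto)
  hence g1: "g 1 = det K" unfolding g_def by simp
  show ?thesis
  proof (rule ccontr)
    assume "\<not> det K > 0"
    hence "g 1 \<le> 0" using g1 by simp
    then obtain l where "l \<in> {0..1}" "g l = 0"
      using IVT2'[of g 1 0 0] cont g0 by auto
    thus False using nz unfolding g_def by auto
  qed
qed


lemma sylvester_det: fixes U V :: "real mat"
  assumes U: "U \<in> carrier_mat n s" and V: "V \<in> carrier_mat s n" and t: "t \<noteq> 0" and sn: "s \<le> n"
  shows "det (t \<cdot>\<^sub>m 1\<^sub>m n + U * V) = t ^ (n - s) * det (t \<cdot>\<^sub>m 1\<^sub>m s + V * U)"
proof -
  define X where "X = four_block_mat (t \<cdot>\<^sub>m 1\<^sub>m n) (- U) V (1\<^sub>m s)"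
  define F1 where "F1 = four_block_mat (1\<^sub>m n) (0\<^sub>m n s) ((1/t) \<cdot>\<^sub>m V) (1\<^sub>m s)"
  define F2 where "F2 = four_block_mat (t \<cdot>\<^sub>m 1\<^sub>m n) (- U) (0\<^sub>m s n) (1\<^sub>m s + (1/t) \<cdot>\<^sub>m (V * U))"
  define G1 where "G1 = four_block_mat (t \<cdot>\<^sub>m 1\<^sub>m n + U * V) (- U) (0\<^sub>m s n) (1\<^sub>m s)"
  define G2 where "G2 = four_block_mat (1\<^sub>m n) (0\<^sub>m n s) V (1\<^sub>m s)"
  have VU: "V * U \<in> carrier_mat s s" and UV: "U * V \<in> carrier_mat n n" using U V by auto
  have "F1 * F2 = four_block_mat (1\<^sub>m n * (t \<cdot>\<^sub>m 1\<^sub>m n) + 0\<^sub>m n s * 0\<^sub>m s n) (1\<^sub>m n * (- U) + 0\<^sub>m n s * (1\<^sub>m s + (1/t) \<cdot>\<^sub>m (V * U)))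
      ((1/t) \<cdot>\<^sub>m V * (t \<cdot>\<^sub>m 1\<^sub>m n) + 1\<^sub>m s * 0\<^sub>m s n) ((1/t) \<cdot>\<^sub>m V * (- U) + 1\<^sub>m s * (1\<^sub>m s + (1/t) \<cdot>\<^sub>m (V * U)))"
    unfolding F1_def F2_def by (rule mult_four_block_mat) (use U V in auto)
  also have "\<dots> = X" unfolding X_def
  proof (intro arg_cong4[where f=four_block_mat])
    show "1\<^sub>m n * (t \<cdot>\<^sub>m 1\<^sub>m n) + 0\<^sub>m n s * 0\<^sub>m s n = t \<cdot>\<^sub>m 1\<^sub>m n"
      by (rule eq_matI) auto
    show "1\<^sub>m n * - U + 0\<^sub>m n s * (1\<^sub>m s + 1 / t \<cdot>\<^sub>m (V * U)) = - U"
      using U V by (intro eq_matI) auto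
    show "1 / t \<cdot>\<^sub>m V * (t \<cdot>\<^sub>m 1\<^sub>m n) + 1\<^sub>m s * 0\<^sub>m s n = V"
      using V t by (intro eq_matI) auto
    show "1 / t \<cdot>\<^sub>m V * - U + 1\<^sub>m s * (1\<^sub>m s + 1 / t \<cdot>\<^sub>m (V * U)) = 1\<^sub>m s"
      using U V t by (intro eq_matI) (auto simp: scalar_prod_def sum_divide_distrib)
  qed
  finally have FX: "F1 * F2 = X" .
  have "G1 * G2 = four_block_mat ((t \<cdot>\<^sub>m 1\<^sub>m n + U * V) * 1\<^sub>m n + (- U) * V) ((t \<cdot>\<^sub>m 1\<^sub>m n + U * V) * 0\<^sub>m n s + (- U) * 1\<^sub>m s)
      (0\<^sub>m s n * 1\<^sub>m n + 1\<^sub>m s * V) (0\<^sub>m s n * 0\<^sub>m n s + 1\<^sub>m s * 1\<^sub>m s)"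
    unfolding G1_def G2_def by (rule mult_four_block_mat) (use U V in auto)
  also have "\<dots> = X" unfolding X_def
  proof (intro arg_cong4[where f=four_block_mat])
    show "(t \<cdot>\<^sub>m 1\<^sub>m n + U * V) * 1\<^sub>m n + - U * V = t \<cdot>\<^sub>m 1\<^sub>m n"
      using U V by (intro eq_matI) (auto simp: scalar_prod_def)
    show "(t \<cdot>\<^sub>m 1\<^sub>m n + U * V) * 0\<^sub>m n s + - U * 1\<^sub>m s = - U"
      using U V by (intro eq_matI) auto
    show "0\<^sub>m s n * 1\<^sub>m n + 1\<^sub>m s * V = V"
      using V by (intro eq_matI) auto
    show "0\<^sub>m s n * 0\<^sub>m n s + 1\<^sub>m s * 1\<^sub>m s = (1\<^sub>m s :: real mat)"
      by (intro eq_matI) auto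
  qed
  finally have GX: "G1 * G2 = X" .
  have dF1: "det F1 = 1" unfolding F1_def
    by (subst det_four_block_mat_upper_right_zero[of _ n _ s]) (use V in auto)
  have dF2: "det F2 = t ^ n * det (1\<^sub>m s + (1/t) \<cdot>\<^sub>m (V * U))" unfolding F2_def
    by (subst det_four_block_mat_lower_left_zero[of _ n _ s]) (use U VU in auto)
  have dG1: "det G1 = det (t \<cdot>\<^sub>m 1\<^sub>m n + U * V)" unfolding G1_def
    by (subst det_four_block_mat_lower_left_zero[of _ n _ s]) (use U UV in auto)
  have dG2: "det G2 = 1" unfolding G2_def
    by (subst det_four_block_mat_upper_right_zero[of _ n _ s]) (use V in auto)
  have F1c: "F1 \<in> carrier_mat (n+s) (n+s)" unfolding F1_def using V by auto
  have F2c: "F2 \<in> carrier_mat (n+s) (n+s)" unfolding F2_def using U V by auto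
  have G1c: "G1 \<in> carrier_mat (n+s) (n+s)" unfolding G1_def using U V by auto
  have G2c: "G2 \<in> carrier_mat (n+s) (n+s)" unfolding G2_def using V by auto
  have "det (t \<cdot>\<^sub>m 1\<^sub>m n + U * V) = det X"
    using det_mult[OF G1c G2c] GX dG1 dG2 by simp
  also have "\<dots> = t ^ n * det (1\<^sub>m s + (1/t) \<cdot>\<^sub>m (V * U))"
    using det_mult[OF F1c F2c] FX dF1 dF2 by simp
  also have "t \<cdot>\<^sub>m 1\<^sub>m s + V * U = t \<cdot>\<^sub>m (1\<^sub>m s + (1/t) \<cdot>\<^sub>m (V * U))"
    using U V t by (intro eq_matI) (auto simp: field_simps)
  hence "det (t \<cdot>\<^sub>m 1\<^sub>m s + V * U) = t ^ s * det (1\<^sub>m s + (1/t) \<cdot>\<^sub>m (V * U))"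
    using U by simp
  hence "det (1\<^sub>m s + (1/t) \<cdot>\<^sub>m (V * U)) = det (t \<cdot>\<^sub>m 1\<^sub>m s + V * U) / t ^ s"
    using t by (simp add: field_simps)
  hence "t ^ n * det (1\<^sub>m s + (1/t) \<cdot>\<^sub>m (V * U)) = t ^ (n - s) * det (t \<cdot>\<^sub>m 1\<^sub>m s + V * U)"
    using t sn by (simp add: power_diff)
  finally show ?thesis .
qed


lemma pick_facts:
  assumes S: "S \<subseteq> {0..<n}"
  shows "inj_on (pick S) {0..<card S}" "pick S ` {0..<card S} = S"
    "\<And>k. k < card S \<Longrightarrow> pick S k < n" "\<And>k. k < card S \<Longrightarrow> pick S k \<in> S"
proof -
  have fin: "finite S" using S finite_subset by blast
  show inj: "inj_on (pick S) {0..<card S}"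
    unfolding inj_on_def by (metis atLeastLessThan_iff nat_neq_iff pick_mono_le less_irrefl)
  have sub: "pick S ` {0..<card S} \<subseteq> S" using pick_in_set_le by auto
  have "card (pick S ` {0..<card S}) = card S" using card_image[OF inj] by simp
  thus "pick S ` {0..<card S} = S" using card_subset_eq[OF fin sub] by simp
  show "\<And>k. k < card S \<Longrightarrow> pick S k \<in> S" using pick_in_set_le by auto
  thus "\<And>k. k < card S \<Longrightarrow> pick S k < n" using S by fastforce
qed

lemma key:
  fixes A C :: "real mat"
  assumes ch: "cholesky_factor n (C - t \<cdot>\<^sub>m 1\<^sub>m n) A" and C: "C \<in> carrier_mat n n"
    and t: "t > 0" and S: "S \<subseteq> {0..<n}"
  shows "det (Mx n A (vec n (\<lambda>i. if i \<in> S then 1 else 0)) + t \<cdot>\<^sub>m 1\<^sub>m n)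
           = t ^ (n - card S) * det (submatrix C S S)"
    and "det (submatrix C S S) > 0"
proof -
  let ?s = "card S"
  note pf = pick_facts[OF S]
  have A: "A \<in> carrier_mat n n" and AA: "C - t \<cdot>\<^sub>m 1\<^sub>m n = transpose_mat A * A"
    using ch unfolding cholesky_factor_def by auto
  have Cij: "C $$ (i,j) = (\<Sum>r<n. A $$ (r,i) * A $$ (r,j)) + (if i = j then t else 0)"
    if "i < n" "j < n" for i j
  proof -
    have "(C - t \<cdot>\<^sub>m 1\<^sub>m n) $$ (i,j) = (transpose_mat A * A) $$ (i,j)" using AA by simp
    thus ?thesis using that A C by (auto simp: scalar_prod_def atLeast0LessThan)
  qed
  define B where "B = mat n ?s (\<lambda>(j,k). A $$ (j, pick S k))"
  have Bc: "B \<in> carrier_mat n ?s" unfolding B_def by simp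
  have sn: "?s \<le> n" using card_mono[OF _ S] by simp
  have dimsub: "card {i. i < dim_row C \<and> i \<in> S} = ?s" "card {i. i < dim_col C \<and> i \<in> S} = ?s"
    using C S by (auto intro!: arg_cong[where f=card])
  have subc: "submatrix C S S \<in> carrier_mat ?s ?s" using dimsub unfolding submatrix_def by auto
  have sub_idx: "submatrix C S S $$ (k,l) = C $$ (pick S k, pick S l)" if "k < ?s" "l < ?s" for k l
    using submatrix_index[of k C S l S] dimsub that by simp
  have K: "t \<cdot>\<^sub>m 1\<^sub>m ?s + transpose_mat B * B = submatrix C S S"
  proof (rule eq_matI)
    fix k l assume kl: "k < dim_row (submatrix C S S)" "l < dim_col (submatrix C S S)"
    hence kl': "k < ?s" "l < ?s" using subc by auto
    have inj: "(pick S k = pick S l) = (k = l)" using pf(1) kl' unfolding inj_on_def by auto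
    show "(t \<cdot>\<^sub>m 1\<^sub>m ?s + transpose_mat B * B) $$ (k, l) = submatrix C S S $$ (k, l)"
      unfolding sub_idx[OF kl'] Cij[OF pf(3)[OF kl'(1)] pf(3)[OF kl'(2)]] inj
      using kl' Bc by (auto simp: B_def scalar_prod_def atLeast0LessThan)
  qed (use subc Bc in auto)
  have M: "Mx n A (vec n (\<lambda>i. if i \<in> S then 1 else 0)) = B * transpose_mat B"
  proof (rule eq_matI)
    fix j k assume jk: "j < dim_row (B * transpose_mat B)" "k < dim_col (B * transpose_mat B)"
    hence jk': "j < n" "k < n" using Bc by auto
    have "(B * transpose_mat B) $$ (j,k) = (\<Sum>l\<in>{0..<?s}. A $$ (j, pick S l) * A $$ (k, pick S l))"
      using jk' Bc by (auto simp: B_def scalar_prod_def)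
    also have "\<dots> = (\<Sum>i\<in>S. A $$ (j, i) * A $$ (k, i))"
      using sum.reindex[OF pf(1), of "\<lambda>i. A $$ (j, i) * A $$ (k, i)"] pf(2) by simp
    also have "\<dots> = (\<Sum>i<n. (if i \<in> S then 1 else 0) * A $$ (j, i) * A $$ (k, i))"
    proof -
      have "(\<Sum>i<n. (if i \<in> S then 1 else 0) * A $$ (j, i) * A $$ (k, i))
          = (\<Sum>i\<in>{..<n} \<inter> S. A $$ (j, i) * A $$ (k, i))"
        by (simp add: sum.inter_restrict) (intro sum.cong, auto)
      also have "{..<n} \<inter> S = S" using S by auto
      finally show ?thesis by simp
    qed
    finally show "Mx n A (vec n (\<lambda>i. if i \<in> S then 1 else 0)) $$ (j, k) = (B * transpose_mat B) $$ (j, k)"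
      using jk' by (simp add: Mx_def)
  qed (use Bc in \<open>auto simp: Mx_def\<close>)
  show "det (Mx n A (vec n (\<lambda>i. if i \<in> S then 1 else 0)) + t \<cdot>\<^sub>m 1\<^sub>m n)
           = t ^ (n - card S) * det (submatrix C S S)"
  proof -
    have "Mx n A (vec n (\<lambda>i. if i \<in> S then 1 else 0)) + t \<cdot>\<^sub>m 1\<^sub>m n = t \<cdot>\<^sub>m 1\<^sub>m n + B * transpose_mat B"
      unfolding M using Bc by (intro comm_add_mat) auto
    thus ?thesis using sylvester_det[OF Bc _ _ sn, of "transpose_mat B" t] t K Bc by simp
  qed
  show "det (submatrix C S S) > 0"
    unfolding K[symmetric]
  proof (rule det_pd_pos)
    show "t \<cdot>\<^sub>m 1\<^sub>m ?s + transpose_mat B * B \<in> carrier_mat ?s ?s" using Bc by auto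
    fix v :: "real vec" assume v: "v \<in> carrier_vec ?s" "v \<noteq> 0\<^sub>v ?s"
    have Bv: "B *\<^sub>v v \<in> carrier_vec n" using Bc v by auto
    have "(t \<cdot>\<^sub>m 1\<^sub>m ?s + transpose_mat B * B) *\<^sub>v v = t \<cdot>\<^sub>v v + transpose_mat B *\<^sub>v (B *\<^sub>v v)"
      using Bc v by (simp add: add_mult_distrib_mat_vec[of _ ?s ?s] smult_mat_mult_vec[of _ ?s ?s])
    hence "v \<bullet> ((t \<cdot>\<^sub>m 1\<^sub>m ?s + transpose_mat B * B) *\<^sub>v v) = t * (v \<bullet> v) + v \<bullet> (transpose_mat B *\<^sub>v (B *\<^sub>v v))"
      using Bc v by (simp add: scalar_prod_add_distrib[of _ ?s])
    also have "v \<bullet> (transpose_mat B *\<^sub>v (B *\<^sub>v v)) = (B *\<^sub>v v) \<bullet> (B *\<^sub>v v)"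
      using transpose_vec_mult_scalar[OF Bc v(1) Bv] comm_scalar_prod[of v ?s] Bc v by auto
    also have "(B *\<^sub>v v) \<bullet> (B *\<^sub>v v) \<ge> 0"
      unfolding scalar_prod_def by (intro sum_nonneg) auto
    moreover have "v \<bullet> v > 0" using vv_pos v by auto
    ultimately show "v \<bullet> ((t \<cdot>\<^sub>m 1\<^sub>m ?s + transpose_mat B * B) *\<^sub>v v) > 0" using t
      by (smt (verit) mult_pos_pos)
  qed
qed


theorem corollary3:
  fixes n s :: nat and C :: "real mat" and t :: real
  assumes "n \<ge> 1" and "1 \<le> s" and "s \<le> n"
    and "sym_pos_def n C"
    and "0 < t" and "t \<le> lambda_min C"
  shows "\<forall>A. cholesky_factor n (C - t \<cdot>\<^sub>m 1\<^sub>m n) A \<longrightarrow>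
    Max {ln (det (submatrix C S S)) | S. S \<subseteq> {0..<n} \<and> card S = s}
    = Max {ln (det (Mx n A x + t \<cdot>\<^sub>m 1\<^sub>m n)) | x.
              x \<in> carrier_vec n \<and> (\<forall>i<n. x $ i \<in> {0,1}) \<and> (\<Sum>i<n. x $ i) = real s}
      - real (n - s) * ln t"
proof (intro allI impI)
  fix A assume ch: "cholesky_factor n (C - t \<cdot>\<^sub>m 1\<^sub>m n) A"
  have C: "C \<in> carrier_mat n n" using assms(4) unfolding sym_pos_def_def by auto
  have t: "t > 0" by fact
  define c where "c = real (n - s) * ln t"
  define F where "F = {ln (det (submatrix C S S)) | S. S \<subseteq> {0..<n} \<and> card S = s}"
  define G where "G = {ln (det (Mx n A x + t \<cdot>\<^sub>m 1\<^sub>m n)) | x.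
              x \<in> carrier_vec n \<and> (\<forall>i<n. x $ i \<in> {0,1}) \<and> (\<Sum>i<n. x $ i) = real s}"
  have eqS: "ln (det (Mx n A (vec n (\<lambda>i. if i \<in> S then 1 else 0)) + t \<cdot>\<^sub>m 1\<^sub>m n))
      = ln (det (submatrix C S S)) + c" if S: "S \<subseteq> {0..<n}" "card S = s" for S
  proof -
    note k = key[OF ch C t S(1)]
    have "ln (t ^ (n - s) * det (submatrix C S S)) = ln (t ^ (n - s)) + ln (det (submatrix C S S))"
      using k(2) t by (intro ln_mult_pos) auto
    thus ?thesis unfolding k(1) S(2) c_def using t by (simp add: ln_realpow)
  qed
  have sumS: "(\<Sum>i<n. vec n (\<lambda>i. if i \<in> S then 1 else 0) $ i) = real (card S)"
    if "S \<subseteq> {0..<n}" for S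
  proof -
    have "(\<Sum>i<n. vec n (\<lambda>i. if i \<in> S then 1 else (0::real)) $ i) = (\<Sum>i<n. if i \<in> S then 1 else 0)"
      by (intro sum.cong) auto
    also have "\<dots> = real (card ({..<n} \<inter> S))" by (simp add: sum.inter_restrict[symmetric])
    also have "{..<n} \<inter> S = S" using that by auto
    finally show ?thesis .
  qed
  have GF: "G = (\<lambda>v. v + c) ` F"
  proof
    show "G \<subseteq> (\<lambda>v. v + c) ` F"
    proof
      fix y assume "y \<in> G"
      then obtain x where x: "x \<in> carrier_vec n" "\<forall>i<n. x $ i \<in> {0,1}" "(\<Sum>i<n. x $ i) = real s"
        and y: "y = ln (det (Mx n A x + t \<cdot>\<^sub>m 1\<^sub>m n))" unfolding G_def by auto
      define S where "S = {i. i < n \<and> x $ i = 1}"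
      have S: "S \<subseteq> {0..<n}" unfolding S_def by auto
      have xv: "x = vec n (\<lambda>i. if i \<in> S then 1 else 0)"
        using x(1,2) unfolding S_def by (intro eq_vecI) auto
      have "card S = s" using sumS[OF S] x(3) unfolding xv[symmetric] by simp
      hence "y = ln (det (submatrix C S S)) + c" using eqS[OF S] y xv by simp
      moreover have "ln (det (submatrix C S S)) \<in> F" unfolding F_def using S \<open>card S = s\<close> by auto
      ultimately show "y \<in> (\<lambda>v. v + c) ` F" by auto
    qed
    show "(\<lambda>v. v + c) ` F \<subseteq> G"
    proof
      fix y assume "y \<in> (\<lambda>v. v + c) ` F"
      then obtain S where S: "S \<subseteq> {0..<n}" "card S = s" and y: "y = ln (det (submatrix C S S)) + c"
        unfolding F_def by auto
      show "y \<in> G" unfolding G_def y eqS[OF S, symmetric]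
        using sumS[OF S(1)] S(2) by (intro CollectI exI[of _ "vec n (\<lambda>i. if i \<in> S then 1 else 0)"]) auto
    qed
  qed
  have finF: "finite F"
  proof -
    have "F = (\<lambda>S. ln (det (submatrix C S S))) ` {S. S \<subseteq> {0..<n} \<and> card S = s}" unfolding F_def by auto
    moreover have "finite {S. S \<subseteq> {0..<n} \<and> card S = s}"
      by (rule finite_subset[of _ "Pow {0..<n}"]) auto
    ultimately show ?thesis by simp
  qed
  have neF: "F \<noteq> {}" unfolding F_def using assms(3) by (auto intro!: exI[of _ "{0..<s}"])
  have "Max G = Max F + c" unfolding GF
    by (rule mono_Max_commute[symmetric]) (use finF neF in \<open>auto simp: mono_def\<close>)
  thus "Max F = Max G - c" by simp
qed
end
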